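(* Fix a finite number $E$ of observed environments $\mathcal{E}_{obs}=\{1,\dots,E\}$ and take the collection of environments of interest to be $\mathcal{E}=\mathcal{E}_{obs}$, with $p(e)$ the uniform distribution on $\mathcal{E}_{obs}$. In the setting described in the context, assume: (Invariance) there exists $z^*\in\{0,1\}^p$ such that $p_e(y\mid x^{z^*})$ is the same for all $e\in\mathcal{E}_{obs}$; (Uniqueness) this $z^*$ is unique; (Prior positivity) $p(z^* )>0$; (Estimation consistency given fixed environments) for every $z$ with $p(z)>0$, as $n\to\infty$, $$\frac{1}{nE}\sum_{i=1}^n\sum_{e=1}^E\log\hat p_e(y_{ei}\mid x_{ei}^z)\xrightarrow{P}\mathbb{E}_{p(e)p_e(y,x^z)}[\log p_e(y\mid x^z)],\qquad \frac{1}{nE}\sum_{i=1}^n\sum_{e=1}^E\log\hat g(y_{ei}\mid x_{ei}^z)\xrightarrow{P}\mathbb{E}_{p(e)p_e(y,x^z)}[\log g(y\mid x^z)];$$ (Finite variance) for every $z$ with $p(z)>0$, $\mathrm{Var}_{p(e)p_e(y,x^z)}\big(\log p_e(y\mid x^z)-\log g(y\mid x^z)\big)<\infty$. Let $\kappa\in(0,1)$ be fixed. Then there exists a sequence $\epsilon_{n,E}=O(R\,e^{-\kappa nE\mu_{\min}})$ such that $P\big(\mathrm{TV}(\hat p(z\mid\mathcal{D}),\delta_{z^*}(z))>\epsilon_{n,E}\big)\to 0$ as $n\to\infty$, where $R:=\Big(\max_{z\neq z^*}\frac{p(z)}{p(z^* )}\Big)\cdot|\mathrm{supp}\,p(z)|$,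 $\mu(z):=\mathbb{E}_{p(e)p_e(x^z)}\big[\mathrm{KL}(p_e(y\mid x^z)\,\|\,g(y\mid x^z))\big]$ and $\mu_{\min}:=\min_{z\neq z^*,\,p(z)>0}\mu(z)$.
   Context: Features $x\in\mathbb{R}^p$, outcome $y$. For $z\in\{0,1\}^p$, $x^z$ is the subvector of coordinates $j$ with $z^{(j)}=1$ and $x^{-z}$ the rest. Each environment $e$ has a joint density $p_e(x,y)$, from which $p_e(x^z)$, $p_e(y\mid x^z)$ are derived. The pooled conditional is $g(y\mid x^z):=\frac{\sum_{e=1}^E\int p_e(x,y)\,\mathrm{d}x^{-z}}{\sum_{e=1}^E p_e(x^z)}$. Data: in each environment $e=1,\dots,E$, $n$ i.i.d. observations $(x_{ei},y_{ei})$ from $p_e(x,y)$; $\mathcal{D}$ is all data. A prior $p(z)$ on $\{0,1\}^p$ is given. For each $z$ a model class $\mathcal{P}_{y\mid x^z}$ is fixed; $\hat p_e(y\mid x^z)$ maximizes $\sum_{i=1}^n\log\tilde p(y_{ei}\mid x_{ei}^z)$ and $\hat g(y\mid x^z)$ maximizes $\sum_{e=1}^E\sum_{i=1}^n\log\tilde p(y_{ei}\mid x_{ei}^z)$ over $\tilde p\in\mathcal{P}_{y\mid x^z}$. The estimated BIP posterior is $\hat p(z\mid\mathcal{D})\propto p(z)\prod_{e=1}^E\prod_{i=1}^n\frac{\hat g(y_{ei}\mid x_{ei}^z)}{\hat p_e(y_{ei}\mid x_{ei}^z)}$. $\delta_{z^*}$ is the point mass at $z^*$ and $\mathrm{TV}(\hat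 p(z\mid\mathcal{D}),\delta_{z^*})=1-\hat p(z^*\mid\mathcal{D})$. *)

theory Defs
  imports "HOL-Probability.Probability" "HOL-Library.Landau_Symbols"
begin

(* A feature vector x in R^p is a function nat => real, an element of the
   product space PiM {..<p} (\<lambda>_. lborel).  A selection z in {0,1}^p is
   represented by the subset z \<subseteq> {..<p} of selected coordinates; x^z is
   restrict x z (an element of PiM z) and x^{-z} lives in PiM ({..<p} - z). *)

type_synonym feat = "nat \<Rightarrow> real"
type_synonym cdens = "feat \<Rightarrow> real \<Rightarrow> real"

definition featM :: "nat set \<Rightarrow> feat measure" where
  "featM I = PiM I (\<lambda>_. lborel)"

(* p_e(x^z, y): integrate p_e(x,y) over x^{-z}; f is the joint density p_e(x,y) *)
definition joint_xzy :: "nat \<Rightarrow> (feat \<times> real \<Rightarrow> real) \<Rightarrow> nat set \<Rightarrow> feat \<Rightarrow> real \<Rightarrow> real" where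
  "joint_xzy p f z xz y =
     (\<integral>w. f (merge z ({..<p} - z) (xz, w), y) \<partial>featM ({..<p} - z))"

definition marg_xz :: "nat \<Rightarrow> (feat \<times> real \<Rightarrow> real) \<Rightarrow> nat set \<Rightarrow> feat \<Rightarrow> real" where
  "marg_xz p f z xz =
     (\<integral>v. f (merge z ({..<p} - z) (xz, fst v), snd v) \<partial>(featM ({..<p} - z) \<Otimes>\<^sub>M lborel))"

definition cond_yxz :: "nat \<Rightarrow> (feat \<times> real \<Rightarrow> real) \<Rightarrow> nat set \<Rightarrow> feat \<Rightarrow> real \<Rightarrow> real" where
  "cond_yxz p f z xz y = joint_xzy p f z xz y / marg_xz p f z xz"

definition pooled_cond :: "nat \<Rightarrow> nat \<Rightarrow> (nat \<Rightarrow> feat \<times> real \<Rightarrow> real) \<Rightarrow> nat set \<Rightarrow> feat \<Rightarrow> real \<Rightarrow> real" where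
  "pooled_cond p E f z xz y =
     (\<Sum>e\<in>{1..E}. joint_xzy p (f e) z xz y) / (\<Sum>e\<in>{1..E}. marg_xz p (f e) z xz)"

(* Invariance: p_e(y|x^z) is the same for all environments (wherever the
   conditionals are defined, i.e. the x^z-marginals are positive; almost everywhere) *)
definition invariant :: "nat \<Rightarrow> nat \<Rightarrow> (nat \<Rightarrow> feat \<times> real \<Rightarrow> real) \<Rightarrow> nat set \<Rightarrow> bool" where
  "invariant p E f z \<longleftrightarrow>
     (\<forall>e\<in>{1..E}. \<forall>e'\<in>{1..E}. AE v in featM z \<Otimes>\<^sub>M lborel.
        (0 < marg_xz p (f e) z (fst v) \<and> 0 < marg_xz p (f e') z (fst v)) \<longrightarrow>
        cond_yxz p (f e) z (fst v) (snd v) = cond_yxz p (f e') z (fst v) (snd v))"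

definition exp_log_cond :: "nat \<Rightarrow> nat \<Rightarrow> (nat \<Rightarrow> feat \<times> real \<Rightarrow> real) \<Rightarrow> nat set \<Rightarrow> real" where
  "exp_log_cond p E f z = (1 / real E) * (\<Sum>e\<in>{1..E}.
     \<integral>v. joint_xzy p (f e) z (fst v) (snd v) * ln (cond_yxz p (f e) z (fst v) (snd v))
       \<partial>(featM z \<Otimes>\<^sub>M lborel))"

definition exp_log_pooled :: "nat \<Rightarrow> nat \<Rightarrow> (nat \<Rightarrow> feat \<times> real \<Rightarrow> real) \<Rightarrow> nat set \<Rightarrow> real" where
  "exp_log_pooled p E f z = (1 / real E) * (\<Sum>e\<in>{1..E}.
     \<integral>v. joint_xzy p (f e) z (fst v) (snd v) * ln (pooled_cond p E f z (fst v) (snd v))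
       \<partial>(featM z \<Otimes>\<^sub>M lborel))"

definition KL_cond :: "nat \<Rightarrow> nat \<Rightarrow> (nat \<Rightarrow> feat \<times> real \<Rightarrow> real) \<Rightarrow> nat \<Rightarrow> nat set \<Rightarrow> feat \<Rightarrow> real" where
  "KL_cond p E f e z xz =
     (\<integral>y. cond_yxz p (f e) z xz y * ln (cond_yxz p (f e) z xz y / pooled_cond p E f z xz y) \<partial>lborel)"

definition mu :: "nat \<Rightarrow> nat \<Rightarrow> (nat \<Rightarrow> feat \<times> real \<Rightarrow> real) \<Rightarrow> nat set \<Rightarrow> real" where
  "mu p E f z = (1 / real E) * (\<Sum>e\<in>{1..E}.
     \<integral>xz. marg_xz p (f e) z xz * KL_cond p E f e z xz \<partial>featM z)"

definition logx :: "real \<Rightarrow> ereal" where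
  "logx t = (if 0 < t then ereal (ln t) else -\<infinity>)"

definition conv_in_prob :: "'a measure \<Rightarrow> (nat \<Rightarrow> 'a \<Rightarrow> ereal) \<Rightarrow> real \<Rightarrow> bool" where
  "conv_in_prob M Z c \<longleftrightarrow>
     (\<forall>\<epsilon>>0. (\<lambda>n. measure M {\<omega> \<in> space M. ereal \<epsilon> < \<bar>Z n \<omega> - ereal c\<bar>}) \<longlonglongrightarrow> 0)"

definition post_weight :: "nat \<Rightarrow> (nat set \<Rightarrow> real) \<Rightarrow> (nat \<Rightarrow> nat \<Rightarrow> 'a \<Rightarrow> feat \<times> real)
    \<Rightarrow> (nat \<Rightarrow> nat set \<Rightarrow> nat \<Rightarrow> 'a \<Rightarrow> cdens) \<Rightarrow> (nat \<Rightarrow> nat set \<Rightarrow> 'a \<Rightarrow> cdens)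
    \<Rightarrow> nat \<Rightarrow> nat set \<Rightarrow> 'a \<Rightarrow> real" where
  "post_weight E prior Xd phat ghat n z \<omega> =
     prior z * (\<Prod>e\<in>{1..E}. \<Prod>i<n.
        ghat n z \<omega> (restrict (fst (Xd e i \<omega>)) z) (snd (Xd e i \<omega>)) /
        phat n z e \<omega> (restrict (fst (Xd e i \<omega>)) z) (snd (Xd e i \<omega>)))"

definition post_hat :: "nat \<Rightarrow> nat \<Rightarrow> (nat set \<Rightarrow> real) \<Rightarrow> (nat \<Rightarrow> nat \<Rightarrow> 'a \<Rightarrow> feat \<times> real)
    \<Rightarrow> (nat \<Rightarrow> nat set \<Rightarrow> nat \<Rightarrow> 'a \<Rightarrow> cdens) \<Rightarrow> (nat \<Rightarrow> nat set \<Rightarrow> 'a \<Rightarrow> cdens)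
    \<Rightarrow> nat \<Rightarrow> nat set \<Rightarrow> 'a \<Rightarrow> real" where
  "post_hat p E prior Xd phat ghat n z \<omega> =
     post_weight E prior Xd phat ghat n z \<omega> /
     (\<Sum>z'\<in>Pow {..<p}. post_weight E prior Xd phat ghat n z' \<omega>)"

definition prior_supp :: "nat \<Rightarrow> (nat set \<Rightarrow> real) \<Rightarrow> nat set set" where
  "prior_supp p prior = {z \<in> Pow {..<p}. 0 < prior z}"

definition Rconst :: "nat \<Rightarrow> (nat set \<Rightarrow> real) \<Rightarrow> nat set \<Rightarrow> real" where
  "Rconst p prior zs =
     Max {prior z / prior zs | z. z \<subseteq> {..<p} \<and> z \<noteq> zs} * real (card (prior_supp p prior))"

definition mu_min :: "nat \<Rightarrow> nat \<Rightarrow> (nat \<Rightarrow> feat \<times> real \<Rightarrow> real) \<Rightarrow> (nat set \<Rightarrow> real) \<Rightarrow> nat set \<Rightarrow> real" where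
  "mu_min p E f prior zs = Min (mu p E f ` {z \<in> prior_supp p prior. z \<noteq> zs})"

end

theory Submission
  imports Defs
begin

lemma psf: "product_sigma_finite (\<lambda>_::nat. lborel::real measure)"
  by (simp add: product_sigma_finite_def lborel.sigma_finite_measure_axioms)

lemma sf_featM: "finite I \<Longrightarrow> sigma_finite_measure (featM I)"
  unfolding featM_def using product_sigma_finite.sigma_finite[OF psf] by blast

context
  fixes p :: nat and z :: "nat set" and g :: "feat \<times> real \<Rightarrow> real"
  assumes zsub: "z \<subseteq> {..<p}" and gnn: "\<And>v. 0 \<le> g v"
    and gmeas: "g \<in> borel_measurable (featM {..<p} \<Otimes>\<^sub>M lborel)"
    and gint: "integrable (featM {..<p} \<Otimes>\<^sub>M lborel) g"
begin

lemma zR: "z \<union> ({..<p} - z) = {..<p}" using zsub by auto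

lemma merge_meas: "merge z ({..<p} - z) \<in> measurable (featM z \<Otimes>\<^sub>M featM ({..<p} - z)) (featM {..<p})"
  unfolding featM_def using measurable_merge[of z "{..<p} - z" "\<lambda>_. lborel"] zR by simp

lemma F_meas1: "(\<lambda>(xz, v). g (merge z ({..<p} - z) (xz, fst v), snd v))
   \<in> borel_measurable (featM z \<Otimes>\<^sub>M (featM ({..<p} - z) \<Otimes>\<^sub>M lborel))"
proof -
  have "(\<lambda>(xz, v). (merge z ({..<p} - z) (xz, fst v), snd v)) \<in> measurable (featM z \<Otimes>\<^sub>M (featM ({..<p} - z) \<Otimes>\<^sub>M lborel)) (featM {..<p} \<Otimes>\<^sub>M lborel)"
    using merge_meas by measurable
  from measurable_comp[OF this gmeas] show ?thesis by (simp add: comp_def case_prod_beta')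
qed

lemma F_meas1'[measurable]: "(\<lambda>x. g (merge z ({..<p} - z) (fst x, fst (snd x)), snd (snd x)))
   \<in> borel_measurable (featM z \<Otimes>\<^sub>M (featM ({..<p} - z) \<Otimes>\<^sub>M borel))"
  using F_meas1 by (simp add: case_prod_beta')

lemma F_meas2: "(\<lambda>(v, w). g (merge z ({..<p} - z) (fst v, w), snd v))
   \<in> borel_measurable ((featM z \<Otimes>\<^sub>M lborel) \<Otimes>\<^sub>M featM ({..<p} - z))"
proof -
  have "(\<lambda>(v, w). (merge z ({..<p} - z) (fst v, w), snd v)) \<in> measurable ((featM z \<Otimes>\<^sub>M lborel) \<Otimes>\<^sub>M featM ({..<p} - z)) (featM {..<p} \<Otimes>\<^sub>M lborel)"
    using merge_meas by measurable
  from measurable_comp[OF this gmeas] show ?thesis by (simp add: comp_def case_prod_beta')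
qed

lemma F_meas2'[measurable]: "(\<lambda>x. g (merge z ({..<p} - z) (fst (fst x), snd x), snd (fst x)))
   \<in> borel_measurable ((featM z \<Otimes>\<^sub>M borel) \<Otimes>\<^sub>M featM ({..<p} - z))"
  using F_meas2 by (simp add: case_prod_beta')

lemma gmeas'[measurable]: "g \<in> borel_measurable (featM {..<p} \<Otimes>\<^sub>M borel)"
  using gmeas by simp

lemma sfN: "sigma_finite_measure (featM z)" using sf_featM zsub finite_subset by blast
lemma sfW: "sigma_finite_measure (featM ({..<p} - z))" using sf_featM by blast
lemma sfWY: "sigma_finite_measure (featM ({..<p} - z) \<Otimes>\<^sub>M lborel)"
  by (rule sigma_finite_pair_measure[OF sfW lborel.sigma_finite_measure_axioms])

lemma sec_meas: "xz \<in> space (featM z) \<Longrightarrow>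
  (\<lambda>v. g (merge z ({..<p} - z) (xz, fst v), snd v)) \<in> borel_measurable (featM ({..<p} - z) \<Otimes>\<^sub>M lborel)"
  using measurable_compose_Pair1[OF _ F_meas1] by simp

lemma AE_sec_int: "AE xz in featM z. integrable (featM ({..<p} - z) \<Otimes>\<^sub>M lborel)
     (\<lambda>v. g (merge z ({..<p} - z) (xz, fst v), snd v))"
proof -
  interpret WY: sigma_finite_measure "featM ({..<p} - z) \<Otimes>\<^sub>M lborel" by (rule sfWY)
  interpret PS: product_sigma_finite "\<lambda>_::nat. lborel::real measure" by (rule psf)
  define H where "H xz = (\<integral>\<^sup>+v. ennreal (g (merge z ({..<p} - z) (xz, fst v), snd v)) \<partial>(featM ({..<p} - z) \<Otimes>\<^sub>M lborel))" for xz
  have Hm: "H \<in> borel_measurable (featM z)"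
    unfolding H_def using F_meas1
    by (intro WY.borel_measurable_nn_integral_fst[where f="\<lambda>(xz,v). ennreal (g (merge z ({..<p} - z) (xz, fst v), snd v))", simplified]) measurable
  have gm2: "(\<lambda>x. \<integral>\<^sup>+y. ennreal (g (x, y)) \<partial>lborel) \<in> borel_measurable (featM {..<p})"
    using gmeas by (intro lborel.borel_measurable_nn_integral_fst[where f="\<lambda>v. ennreal (g v)", simplified]) measurable
  have "(\<integral>\<^sup>+v. ennreal (g v) \<partial>(featM {..<p} \<Otimes>\<^sub>M lborel)) < \<infinity>"
    using gint gnn by (simp add: integrable_iff_bounded)
  also have "(\<integral>\<^sup>+v. ennreal (g v) \<partial>(featM {..<p} \<Otimes>\<^sub>M lborel)) = (\<integral>\<^sup>+x. \<integral>\<^sup>+y. ennreal (g (x, y)) \<partial>lborel \<partial>featM {..<p})"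
    using gmeas by (intro lborel.nn_integral_fst[symmetric]) measurable
  also have "\<dots> = (\<integral>\<^sup>+xz. \<integral>\<^sup>+w. (\<integral>\<^sup>+y. ennreal (g (merge z ({..<p} - z) (xz, w), y)) \<partial>lborel) \<partial>featM ({..<p} - z) \<partial>featM z)"
    using PS.product_nn_integral_fold[of z "{..<p} - z" "\<lambda>x. \<integral>\<^sup>+y. ennreal (g (x, y)) \<partial>lborel"] gm2 zR zsub finite_subset
    unfolding featM_def by auto
  also have "\<dots> = (\<integral>\<^sup>+xz. H xz \<partial>featM z)"
  proof (rule nn_integral_cong)
    fix xz assume xz: "xz \<in> space (featM z)"
    show "(\<integral>\<^sup>+w. (\<integral>\<^sup>+y. ennreal (g (merge z ({..<p} - z) (xz, w), y)) \<partial>lborel) \<partial>featM ({..<p} - z)) = H xz"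
      unfolding H_def
    proof (intro lborel.nn_integral_fst[where f="\<lambda>v. ennreal (g (merge z ({..<p} - z) (xz, fst v), snd v))", simplified])
      show "(\<lambda>v. ennreal (g (merge z ({..<p} - z) (xz, fst v), snd v))) \<in> borel_measurable (featM ({..<p} - z) \<Otimes>\<^sub>M lborel)"
        using sec_meas[OF xz] by measurable
    qed
  qed
  finally have "AE xz in featM z. H xz \<noteq> \<infinity>"
    by (intro nn_integral_PInf_AE Hm) auto
  then show ?thesis
  proof (rule AE_mp[OF _ AE_I2], intro impI)
    fix xz assume xz: "xz \<in> space (featM z)" and "H xz \<noteq> \<infinity>"
    then show "integrable (featM ({..<p} - z) \<Otimes>\<^sub>M lborel) (\<lambda>v. g (merge z ({..<p} - z) (xz, fst v), snd v))"
      using sec_meas[OF xz] gnn unfolding H_def by (simp add: integrable_iff_bounded top.not_eq_extremum)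
  qed
qed

lemma J_meas: "(\<lambda>v. joint_xzy p g z (fst v) (snd v)) \<in> borel_measurable (featM z \<Otimes>\<^sub>M lborel)"
proof -
  interpret W: sigma_finite_measure "featM ({..<p} - z)" by (rule sfW)
  show ?thesis unfolding joint_xzy_def
    by (rule W.borel_measurable_lebesgue_integral[where f="\<lambda>v w. g (merge z ({..<p} - z) (fst v, w), snd v)"])
       (use F_meas2 in simp)
qed

lemma m_meas: "marg_xz p g z \<in> borel_measurable (featM z)"
proof -
  interpret WY: sigma_finite_measure "featM ({..<p} - z) \<Otimes>\<^sub>M lborel" by (rule sfWY)
  have e: "marg_xz p g z = (\<lambda>xz. \<integral>v. g (merge z ({..<p} - z) (xz, fst v), snd v) \<partial>(featM ({..<p} - z) \<Otimes>\<^sub>M lborel))"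
    unfolding marg_xz_def by auto
  show ?thesis unfolding e
    by (rule WY.borel_measurable_lebesgue_integral[where f="\<lambda>xz v. g (merge z ({..<p} - z) (xz, fst v), snd v)"])
       (use F_meas1 in simp)
qed

lemma J_nonneg: "0 \<le> joint_xzy p g z xz y"
  unfolding joint_xzy_def by (rule integral_nonneg_AE) (simp add: gnn)

lemma m_nonneg: "0 \<le> marg_xz p g z xz"
  unfolding marg_xz_def by (rule integral_nonneg_AE) (simp add: gnn)

lemma B3: "AE xz in featM z. marg_xz p g z xz = 0 \<longrightarrow> (AE y in lborel. joint_xzy p g z xz y = 0)"
  using AE_sec_int
proof (rule AE_mp[OF _ AE_I2], intro impI)
  fix xz assume xz: "xz \<in> space (featM z)"
    and int: "integrable (featM ({..<p} - z) \<Otimes>\<^sub>M lborel) (\<lambda>v. g (merge z ({..<p} - z) (xz, fst v), snd v))"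
    and m0: "marg_xz p g z xz = 0"
  interpret W: sigma_finite_measure "featM ({..<p} - z)" by (rule sfW)
  interpret WY: pair_sigma_finite "featM ({..<p} - z)" lborel ..
  have int': "integrable (featM ({..<p} - z) \<Otimes>\<^sub>M lborel) (case_prod (\<lambda>w y. g (merge z ({..<p} - z) (xz, w), y)))"
    using int by (simp add: case_prod_beta')
  have Jint: "integrable lborel (\<lambda>y. joint_xzy p g z xz y)"
    using WY.integrable_snd[OF int'] unfolding joint_xzy_def by simp
  have "(\<integral>y. joint_xzy p g z xz y \<partial>lborel) = marg_xz p g z xz"
    using WY.integral_snd[OF int'] unfolding joint_xzy_def marg_xz_def by (simp add: case_prod_beta')
  with m0 have "(\<integral>y. joint_xzy p g z xz y \<partial>lborel) = 0" by simp
  then show "AE y in lborel. joint_xzy p g z xz y = 0"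
    using integral_nonneg_eq_0_iff_AE[OF Jint] J_nonneg by simp
qed

end

lemma pointwise_zero:
  fixes J m :: "nat \<Rightarrow> real" and S :: "nat set"
  assumes fin: "finite S" and e: "e \<in> S"
    and Jn: "\<And>e'. e' \<in> S \<Longrightarrow> 0 \<le> J e'" and mn: "\<And>e'. e' \<in> S \<Longrightarrow> 0 \<le> m e'"
    and h1: "\<And>e'. e' \<in> S \<Longrightarrow> m e' = 0 \<Longrightarrow> J e' = 0"
    and h2: "\<And>e'. e' \<in> S \<Longrightarrow> 0 < m e \<Longrightarrow> 0 < m e' \<Longrightarrow> J e / m e = J e' / m e'"
  shows "J e * (ln (J e / m e) - ln ((\<Sum>e'\<in>S. J e') / (\<Sum>e'\<in>S. m e'))) = 0"
proof (cases "m e = 0")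
  case True then show ?thesis using h1[OF e] by simp
next
  case False
  then have me: "0 < m e" using mn[OF e] by simp
  define c where "c = J e / m e"
  have Je': "J e' = m e' * c" if "e' \<in> S" for e'
  proof (cases "m e' = 0")
    case True then show ?thesis using h1[OF that] by simp
  next
    case False
    then have "0 < m e'" using mn[OF that] by simp
    then show ?thesis using h2[OF that me] unfolding c_def by (simp add: field_simps)
  qed
  have "(\<Sum>e'\<in>S. J e') = (\<Sum>e'\<in>S. m e') * c"
    by (simp add: Je' sum_distrib_right)
  moreover have "m e \<le> (\<Sum>e'\<in>S. m e')" by (rule member_le_sum) (use mn fin e in auto)
  ultimately have "(\<Sum>e'\<in>S. J e') / (\<Sum>e'\<in>S. m e') = c" using me by simp
  then show ?thesis unfolding c_def by simp
qed

lemma pointwise_kl: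
  fixes J m :: "nat \<Rightarrow> real" and S :: "nat set"
  assumes fin: "finite S" and e: "e \<in> S"
    and Jn: "\<And>e'. e' \<in> S \<Longrightarrow> 0 \<le> J e'" and mn: "\<And>e'. e' \<in> S \<Longrightarrow> 0 \<le> m e'"
    and me: "0 < m e"
  shows "J e * ln (J e / m e) - J e * ln ((\<Sum>e'\<in>S. J e') / (\<Sum>e'\<in>S. m e'))
     = m e * (J e / m e * ln (J e / m e / ((\<Sum>e'\<in>S. J e') / (\<Sum>e'\<in>S. m e'))))"
proof (cases "J e = 0")
  case True then show ?thesis by simp
next
  case False
  then have Je: "0 < J e" using Jn[OF e] by simp
  have "J e \<le> (\<Sum>e'\<in>S. J e')" by (rule member_le_sum) (use Jn fin e in auto)
  moreover have "m e \<le> (\<Sum>e'\<in>S. m e')" by (rule member_le_sum) (use mn fin e in auto)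
  ultimately have P: "0 < (\<Sum>e'\<in>S. J e') / (\<Sum>e'\<in>S. m e')" using Je me by simp
  have "ln (J e / m e / ((\<Sum>e'\<in>S. J e') / (\<Sum>e'\<in>S. m e'))) = ln (J e / m e) - ln ((\<Sum>e'\<in>S. J e') / (\<Sum>e'\<in>S. m e'))"
  proof -
    have L: "ln (x / c) = ln x - ln c" if "0 < x" "0 < c" for x c :: real using that by (simp add: ln_div)
    show ?thesis using L[OF divide_pos_pos[OF Je me] P] .
  qed
  then show ?thesis using me by (simp add: right_diff_distrib)
qed

context
  fixes p E :: nat and z :: "nat set" and f :: "nat \<Rightarrow> feat \<times> real \<Rightarrow> real"
  assumes zsub: "z \<subseteq> {..<p}" and fnn: "\<And>e v. e \<in> {1..E} \<Longrightarrow> 0 \<le> f e v"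
    and fmeas: "\<And>e. e \<in> {1..E} \<Longrightarrow> f e \<in> borel_measurable (featM {..<p} \<Otimes>\<^sub>M lborel)"
    and fint: "\<And>e. e \<in> {1..E} \<Longrightarrow> integrable (featM {..<p} \<Otimes>\<^sub>M lborel) (f e)"
begin

lemma Jm[measurable]: "e \<in> {1..E} \<Longrightarrow> (\<lambda>v. joint_xzy p (f e) z (fst v) (snd v)) \<in> borel_measurable (featM z \<Otimes>\<^sub>M lborel)"
  by (rule J_meas[OF zsub fnn fmeas fint])
lemma Mm: "e \<in> {1..E} \<Longrightarrow> marg_xz p (f e) z \<in> borel_measurable (featM z)"
  by (rule m_meas[OF zsub fnn fmeas fint])
lemma Mm2[measurable]: "e \<in> {1..E} \<Longrightarrow> (\<lambda>v. marg_xz p (f e) z (fst v)) \<in> borel_measurable (featM z \<Otimes>\<^sub>M lborel)"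
  using Mm by measurable
lemma Jn: "e \<in> {1..E} \<Longrightarrow> 0 \<le> joint_xzy p (f e) z xz y"
  by (rule J_nonneg[OF zsub fnn fmeas fint])
lemma Mn: "e \<in> {1..E} \<Longrightarrow> 0 \<le> marg_xz p (f e) z xz"
  by (rule m_nonneg[OF zsub fnn fmeas fint])
lemma B3e: "e \<in> {1..E} \<Longrightarrow> AE xz in featM z. marg_xz p (f e) z xz = 0 \<longrightarrow> (AE y in lborel. joint_xzy p (f e) z xz y = 0)"
  by (rule B3[OF zsub fnn fmeas fint])

lemma Pm[measurable]: "(\<lambda>v. pooled_cond p E f z (fst v) (snd v)) \<in> borel_measurable (featM z \<Otimes>\<^sub>M lborel)"
  unfolding pooled_cond_def by measurable

lemma Cm[measurable]: "e \<in> {1..E} \<Longrightarrow> (\<lambda>v. cond_yxz p (f e) z (fst v) (snd v)) \<in> borel_measurable (featM z \<Otimes>\<^sub>M lborel)"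
  unfolding cond_yxz_def by measurable

lemma KLm: "e \<in> {1..E} \<Longrightarrow> KL_cond p E f e z \<in> borel_measurable (featM z)"
  unfolding KL_cond_def
  by (rule lborel.borel_measurable_lebesgue_integral[where f="\<lambda>xz y. cond_yxz p (f e) z xz y * ln (cond_yxz p (f e) z xz y / pooled_cond p E f z xz y)"]) (simp add: case_prod_beta')

lemma fubini_h:
  assumes e: "e \<in> {1..E}"
    and i1: "integrable (featM z \<Otimes>\<^sub>M lborel) (\<lambda>v. joint_xzy p (f e) z (fst v) (snd v) * ln (cond_yxz p (f e) z (fst v) (snd v)))"
    and i2: "integrable (featM z \<Otimes>\<^sub>M lborel) (\<lambda>v. joint_xzy p (f e) z (fst v) (snd v) * ln (pooled_cond p E f z (fst v) (snd v)))"
  shows "(\<integral>v. joint_xzy p (f e) z (fst v) (snd v) * ln (cond_yxz p (f e) z (fst v) (snd v)) \<partial>(featM z \<Otimes>\<^sub>M lborel))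
       - (\<integral>v. joint_xzy p (f e) z (fst v) (snd v) * ln (pooled_cond p E f z (fst v) (snd v)) \<partial>(featM z \<Otimes>\<^sub>M lborel))
     = (\<integral>xz. (\<integral>y. joint_xzy p (f e) z xz y * ln (cond_yxz p (f e) z xz y) - joint_xzy p (f e) z xz y * ln (pooled_cond p E f z xz y) \<partial>lborel) \<partial>featM z)"
   and "integrable (featM z) (\<lambda>xz. (\<integral>y. joint_xzy p (f e) z xz y * ln (cond_yxz p (f e) z xz y) - joint_xzy p (f e) z xz y * ln (pooled_cond p E f z xz y) \<partial>lborel))"
proof -
  interpret N: sigma_finite_measure "featM z" using sf_featM zsub by (meson finite_lessThan finite_subset)
  interpret NY: pair_sigma_finite "featM z" lborel ..
  have i: "integrable (featM z \<Otimes>\<^sub>M lborel) (\<lambda>v. joint_xzy p (f e) z (fst v) (snd v) * ln (cond_yxz p (f e) z (fst v) (snd v)) - joint_xzy p (f e) z (fst v) (snd v) * ln (pooled_cond p E f z (fst v) (snd v)))"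
    using i1 i2 by simp
  show "(\<integral>v. joint_xzy p (f e) z (fst v) (snd v) * ln (cond_yxz p (f e) z (fst v) (snd v)) \<partial>(featM z \<Otimes>\<^sub>M lborel))
       - (\<integral>v. joint_xzy p (f e) z (fst v) (snd v) * ln (pooled_cond p E f z (fst v) (snd v)) \<partial>(featM z \<Otimes>\<^sub>M lborel))
     = (\<integral>xz. (\<integral>y. joint_xzy p (f e) z xz y * ln (cond_yxz p (f e) z xz y) - joint_xzy p (f e) z xz y * ln (pooled_cond p E f z xz y) \<partial>lborel) \<partial>featM z)"
    using NY.integral_fst'[OF i] i1 i2 by simp
  show "integrable (featM z) (\<lambda>xz. (\<integral>y. joint_xzy p (f e) z xz y * ln (cond_yxz p (f e) z xz y) - joint_xzy p (f e) z xz y * ln (pooled_cond p E f z xz y) \<partial>lborel))"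
    using NY.integrable_fst'[OF i] by simp
qed

lemma L1e:
  assumes e: "e \<in> {1..E}"
    and i1: "integrable (featM z \<Otimes>\<^sub>M lborel) (\<lambda>v. joint_xzy p (f e) z (fst v) (snd v) * ln (cond_yxz p (f e) z (fst v) (snd v)))"
    and i2: "integrable (featM z \<Otimes>\<^sub>M lborel) (\<lambda>v. joint_xzy p (f e) z (fst v) (snd v) * ln (pooled_cond p E f z (fst v) (snd v)))"
  shows "(\<integral>v. joint_xzy p (f e) z (fst v) (snd v) * ln (cond_yxz p (f e) z (fst v) (snd v)) \<partial>(featM z \<Otimes>\<^sub>M lborel))
       - (\<integral>v. joint_xzy p (f e) z (fst v) (snd v) * ln (pooled_cond p E f z (fst v) (snd v)) \<partial>(featM z \<Otimes>\<^sub>M lborel))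
     = (\<integral>xz. marg_xz p (f e) z xz * KL_cond p E f e z xz \<partial>featM z)"
proof -
  have fin: "finite {1..E}" by simp
  note F = fubini_h[OF e i1 i2]
  show ?thesis unfolding F(1)
  proof (rule integral_cong_AE)
    show "(\<lambda>xz. (\<integral>y. joint_xzy p (f e) z xz y * ln (cond_yxz p (f e) z xz y) - joint_xzy p (f e) z xz y * ln (pooled_cond p E f z xz y) \<partial>lborel)) \<in> borel_measurable (featM z)"
      using F(2) by (rule borel_measurable_integrable)
    show "(\<lambda>xz. marg_xz p (f e) z xz * KL_cond p E f e z xz) \<in> borel_measurable (featM z)"
      using Mm[OF e] KLm[OF e] by measurable
    show "AE xz in featM z. (\<integral>y. joint_xzy p (f e) z xz y * ln (cond_yxz p (f e) z xz y) - joint_xzy p (f e) z xz y * ln (pooled_cond p E f z xz y) \<partial>lborel)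
        = marg_xz p (f e) z xz * KL_cond p E f e z xz"
      using B3e[OF e]
    proof (rule AE_mp[OF _ AE_I2], intro impI)
      fix xz assume B: "marg_xz p (f e) z xz = 0 \<longrightarrow> (AE y in lborel. joint_xzy p (f e) z xz y = 0)"
      show "(\<integral>y. joint_xzy p (f e) z xz y * ln (cond_yxz p (f e) z xz y) - joint_xzy p (f e) z xz y * ln (pooled_cond p E f z xz y) \<partial>lborel)
        = marg_xz p (f e) z xz * KL_cond p E f e z xz"
      proof (cases "marg_xz p (f e) z xz = 0")
        case True
        then have "AE y in lborel. joint_xzy p (f e) z xz y = 0" using B by simp
        then have "AE y in lborel. joint_xzy p (f e) z xz y * ln (cond_yxz p (f e) z xz y) - joint_xzy p (f e) z xz y * ln (pooled_cond p E f z xz y) = 0"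
          by eventually_elim simp
        then show ?thesis using True by (simp add: integral_eq_zero_AE)
      next
        case False
        then have me: "0 < marg_xz p (f e) z xz" using Mn[OF e] by (simp add: order_less_le)
        have "joint_xzy p (f e) z xz y * ln (cond_yxz p (f e) z xz y) - joint_xzy p (f e) z xz y * ln (pooled_cond p E f z xz y)
           = marg_xz p (f e) z xz * (cond_yxz p (f e) z xz y * ln (cond_yxz p (f e) z xz y / pooled_cond p E f z xz y))" for y
          unfolding cond_yxz_def pooled_cond_def
          by (rule pointwise_kl[where J="\<lambda>e'. joint_xzy p (f e') z xz y" and m="\<lambda>e'. marg_xz p (f e') z xz", OF fin e _ _ me]) (auto intro: Jn Mn)
        then show ?thesis unfolding KL_cond_def by simp
      qed
    qed
  qed
qed

lemma L2e:
  assumes e: "e \<in> {1..E}" and inv: "invariant p E f z"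
    and i1: "integrable (featM z \<Otimes>\<^sub>M lborel) (\<lambda>v. joint_xzy p (f e) z (fst v) (snd v) * ln (cond_yxz p (f e) z (fst v) (snd v)))"
    and i2: "integrable (featM z \<Otimes>\<^sub>M lborel) (\<lambda>v. joint_xzy p (f e) z (fst v) (snd v) * ln (pooled_cond p E f z (fst v) (snd v)))"
  shows "(\<integral>v. joint_xzy p (f e) z (fst v) (snd v) * ln (cond_yxz p (f e) z (fst v) (snd v)) \<partial>(featM z \<Otimes>\<^sub>M lborel))
       - (\<integral>v. joint_xzy p (f e) z (fst v) (snd v) * ln (pooled_cond p E f z (fst v) (snd v)) \<partial>(featM z \<Otimes>\<^sub>M lborel))
     = 0"
proof -
  interpret N: sigma_finite_measure "featM z" using sf_featM zsub by (meson finite_lessThan finite_subset)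
  interpret NY: pair_sigma_finite "featM z" lborel ..
  have fin: "finite {1..E}" by simp
  note F = fubini_h[OF e i1 i2]
  have A0: "AE v in featM z \<Otimes>\<^sub>M lborel. \<forall>e1\<in>{1..E}. \<forall>e2\<in>{1..E}.
        (0 < marg_xz p (f e1) z (fst v) \<and> 0 < marg_xz p (f e2) z (fst v)) \<longrightarrow>
        cond_yxz p (f e1) z (fst v) (snd v) = cond_yxz p (f e2) z (fst v) (snd v)"
    by (intro AE_finite_allI finite_atLeastAtMost) (use inv in \<open>auto simp: invariant_def\<close>)
  have A1: "AE xz in featM z. AE y in lborel. \<forall>e1\<in>{1..E}. \<forall>e2\<in>{1..E}.
        (0 < marg_xz p (f e1) z xz \<and> 0 < marg_xz p (f e2) z xz) \<longrightarrow>
        cond_yxz p (f e1) z xz y = cond_yxz p (f e2) z xz y"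
    using NY.AE_pair[OF A0] by simp
  have A2: "AE xz in featM z. \<forall>e'\<in>{1..E}. marg_xz p (f e') z xz = 0 \<longrightarrow> (AE y in lborel. joint_xzy p (f e') z xz y = 0)"
    by (intro AE_finite_allI finite_atLeastAtMost) (rule B3e)
  have "AE xz in featM z. (\<integral>y. joint_xzy p (f e) z xz y * ln (cond_yxz p (f e) z xz y) - joint_xzy p (f e) z xz y * ln (pooled_cond p E f z xz y) \<partial>lborel) = 0"
    using A1 A2
  proof (eventually_elim)
    case (elim xz)
    have "AE y in lborel. \<forall>e'\<in>{1..E}. marg_xz p (f e') z xz = 0 \<longrightarrow> joint_xzy p (f e') z xz y = 0"
    proof (intro AE_finite_allI finite_atLeastAtMost)
      fix e' assume "e' \<in> {1..E}"
      then show "AE y in lborel. marg_xz p (f e') z xz = 0 \<longrightarrow> joint_xzy p (f e') z xz y = 0"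
        using elim(2) by (cases "marg_xz p (f e') z xz = 0") auto
    qed
    with elim(1) have "AE y in lborel. joint_xzy p (f e) z xz y * ln (cond_yxz p (f e) z xz y) - joint_xzy p (f e) z xz y * ln (pooled_cond p E f z xz y) = 0"
    proof (eventually_elim)
      case (elim y)
      have "joint_xzy p (f e) z xz y * (ln (joint_xzy p (f e) z xz y / marg_xz p (f e) z xz) - ln ((\<Sum>e'\<in>{1..E}. joint_xzy p (f e') z xz y) / (\<Sum>e'\<in>{1..E}. marg_xz p (f e') z xz))) = 0"
      proof (rule pointwise_zero[OF fin e])
        fix e' assume e': "e' \<in> {1..E}" "0 < marg_xz p (f e) z xz" "0 < marg_xz p (f e') z xz"
        then show "joint_xzy p (f e) z xz y / marg_xz p (f e) z xz = joint_xzy p (f e') z xz y / marg_xz p (f e') z xz"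
          using elim(1) e unfolding cond_yxz_def by blast
      qed (use elim(2) in \<open>auto intro: Jn Mn\<close>)
      then show ?case unfolding cond_yxz_def pooled_cond_def by (simp add: right_diff_distrib)
    qed
    then show ?case by (rule integral_eq_zero_AE)
  qed
  then show ?thesis unfolding F(1) by (rule integral_eq_zero_AE)
qed

end

lemma sum_ereal_if:
  assumes "finite I"
  shows "(\<Sum>i\<in>I. if P i then ereal (r i) else -\<infinity>) = (if \<forall>i\<in>I. P i then ereal (\<Sum>i\<in>I. r i) else -\<infinity>)"
  using assms
proof (induction I rule: finite_induct)
  case empty then show ?case by simp
next
  case (insert x F)
  then show ?case by (cases "P x") auto
qed

lemma sum_logx:
  assumes "finite I"
  shows "(\<Sum>i\<in>I. logx (a i)) = (if \<forall>i\<in>I. 0 < a i then ereal (\<Sum>i\<in>I. ln (a i)) else -\<infinity>)"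
  unfolding logx_def using sum_ereal_if[OF assms, of "\<lambda>i. 0 < a i" "\<lambda>i. ln (a i)"] by simp

lemma sum2_logx:
  assumes "finite I" "finite S"
  shows "(\<Sum>i\<in>I. \<Sum>e\<in>S. logx (a i e)) = (if \<forall>i\<in>I. \<forall>e\<in>S. 0 < a i e then ereal (\<Sum>i\<in>I. \<Sum>e\<in>S. ln (a i e)) else -\<infinity>)"
proof -
  have "(\<Sum>i\<in>I. \<Sum>e\<in>S. logx (a i e)) = (\<Sum>i\<in>I. if \<forall>e\<in>S. 0 < a i e then ereal (\<Sum>e\<in>S. ln (a i e)) else -\<infinity>)"
    using sum_logx[OF assms(2)] by simp
  also have "\<dots> = (if \<forall>i\<in>I. \<forall>e\<in>S. 0 < a i e then ereal (\<Sum>i\<in>I. \<Sum>e\<in>S. ln (a i e)) else -\<infinity>)"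
    by (rule sum_ereal_if[OF assms(1)])
  finally show ?thesis .
qed

lemma good_Z:
  fixes c R d \<delta> :: real
  assumes c: "0 < c" and ng: "\<not> (ereal \<delta> < \<bar>ereal c * (if Q then ereal R else -\<infinity>) - ereal d\<bar>)"
  shows "Q \<and> \<bar>c * R - d\<bar> \<le> \<delta>"
proof (cases Q)
  case True then show ?thesis using ng by simp
next
  case False then show ?thesis using ng c by simp
qed

lemma prod_exp:
  fixes x y :: "nat \<Rightarrow> nat \<Rightarrow> real"
  assumes "\<And>e i. e \<in> S \<Longrightarrow> i \<in> I \<Longrightarrow> 0 < x e i \<and> 0 < y e i" and fS: "finite S" and fI: "finite I"
  shows "(\<Prod>e\<in>S. \<Prod>i\<in>I. x e i / y e i) = exp ((\<Sum>i\<in>I. \<Sum>e\<in>S. ln (x e i)) - (\<Sum>i\<in>I. \<Sum>e\<in>S. ln (y e i)))"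
proof -
  have "(\<Sum>i\<in>I. \<Sum>e\<in>S. ln (x e i)) - (\<Sum>i\<in>I. \<Sum>e\<in>S. ln (y e i)) = (\<Sum>e\<in>S. \<Sum>i\<in>I. ln (x e i) - ln (y e i))"
    by (simp add: sum.swap[of _ I S] sum_subtractf)
  then have "exp ((\<Sum>i\<in>I. \<Sum>e\<in>S. ln (x e i)) - (\<Sum>i\<in>I. \<Sum>e\<in>S. ln (y e i))) = (\<Prod>e\<in>S. \<Prod>i\<in>I. exp (ln (x e i) - ln (y e i)))"
    using fS fI by (simp add: exp_sum del: exp_diff)
  also have "\<dots> = (\<Prod>e\<in>S. \<Prod>i\<in>I. x e i / y e i)"
    using assms by (intro prod.cong refl) (simp add: exp_diff)
  finally show ?thesis by simp
qed

lemma post_bound: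
  fixes w :: "'z \<Rightarrow> real"
  assumes fin: "finite P" and zs: "zs \<in> P" and T: "T \<subseteq> P - {zs}"
    and w0: "\<And>z. z \<in> P - T - {zs} \<Longrightarrow> w z = 0"
    and wT: "\<And>z. z \<in> T \<Longrightarrow> 0 \<le> w z" and wzs: "0 < w zs"
  shows "1 - w zs / (\<Sum>z\<in>P. w z) \<le> (\<Sum>z\<in>T. w z / w zs)"
    and "1 - w zs / (\<Sum>z\<in>P. w z) \<le> 1"
proof -
  have "(\<Sum>z\<in>P. w z) = w zs + (\<Sum>z\<in>P - {zs}. w z)"
    using fin zs by (simp add: sum.remove)
  also have "(\<Sum>z\<in>P - {zs}. w z) = (\<Sum>z\<in>T. w z)"
    using fin T w0 by (intro sum.mono_neutral_right) auto
  finally have W: "(\<Sum>z\<in>P. w z) = w zs + (\<Sum>z\<in>T. w z)" .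
  have Tn: "0 \<le> (\<Sum>z\<in>T. w z)" using wT by (simp add: sum_nonneg)
  have "1 - w zs / (w zs + (\<Sum>z\<in>T. w z)) = (\<Sum>z\<in>T. w z) / (w zs + (\<Sum>z\<in>T. w z))"
    using wzs Tn by (simp add: field_simps)
  also have "\<dots> \<le> (\<Sum>z\<in>T. w z) / w zs"
    using wzs Tn by (intro divide_left_mono) auto
  also have "\<dots> = (\<Sum>z\<in>T. w z / w zs)" by (simp add: sum_divide_distrib)
  finally show "1 - w zs / (\<Sum>z\<in>P. w z) \<le> (\<Sum>z\<in>T. w z / w zs)" using W by simp
  show "1 - w zs / (\<Sum>z\<in>P. w z) \<le> 1" using W wzs Tn by simp
qed

theorem theorem4:
  fixes M :: "'a measure" and p E :: nat
    and f :: "nat \<Rightarrow> feat \<times> real \<Rightarrow> real"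
    and Xd :: "nat \<Rightarrow> nat \<Rightarrow> 'a \<Rightarrow> feat \<times> real"
    and prior :: "nat set \<Rightarrow> real"
    and Pcls :: "nat set \<Rightarrow> cdens set"
    and phat :: "nat \<Rightarrow> nat set \<Rightarrow> nat \<Rightarrow> 'a \<Rightarrow> cdens"
    and ghat :: "nat \<Rightarrow> nat set \<Rightarrow> 'a \<Rightarrow> cdens"
    and zs :: "nat set" and \<kappa> :: real
  assumes M: "prob_space M"
    and E: "1 \<le> E"
    and dens_nonneg: "\<And>e v. e \<in> {1..E} \<Longrightarrow> 0 \<le> f e v"
    and distr: "\<And>e i. e \<in> {1..E} \<Longrightarrow>
        distributed M (featM {..<p} \<Otimes>\<^sub>M lborel) (Xd e i) (\<lambda>v. ennreal (f e v))"
    and iid: "\<And>e. e \<in> {1..E} \<Longrightarrow>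
        prob_space.indep_vars M (\<lambda>_. featM {..<p} \<Otimes>\<^sub>M lborel) (Xd e) UNIV"
    and mle_p: "\<And>n z e \<omega>. z \<subseteq> {..<p} \<Longrightarrow> e \<in> {1..E} \<Longrightarrow> \<omega> \<in> space M \<Longrightarrow>
        phat n z e \<omega> \<in> Pcls z \<and>
        (\<forall>q\<in>Pcls z.
          (\<Sum>i<n. logx (q (restrict (fst (Xd e i \<omega>)) z) (snd (Xd e i \<omega>))))
          \<le> (\<Sum>i<n. logx (phat n z e \<omega> (restrict (fst (Xd e i \<omega>)) z) (snd (Xd e i \<omega>)))))"
    and mle_g: "\<And>n z \<omega>. z \<subseteq> {..<p} \<Longrightarrow> \<omega> \<in> space M \<Longrightarrow>
        ghat n z \<omega> \<in> Pcls z \<and>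
        (\<forall>q\<in>Pcls z.
          (\<Sum>e\<in>{1..E}. \<Sum>i<n. logx (q (restrict (fst (Xd e i \<omega>)) z) (snd (Xd e i \<omega>))))
          \<le> (\<Sum>e\<in>{1..E}. \<Sum>i<n. logx (ghat n z \<omega> (restrict (fst (Xd e i \<omega>)) z) (snd (Xd e i \<omega>)))))"
    and meas_p: "\<And>n z e i. z \<subseteq> {..<p} \<Longrightarrow> e \<in> {1..E} \<Longrightarrow> i < n \<Longrightarrow>
        (\<lambda>\<omega>. phat n z e \<omega> (restrict (fst (Xd e i \<omega>)) z) (snd (Xd e i \<omega>))) \<in> borel_measurable M"
    and meas_g: "\<And>n z e i. z \<subseteq> {..<p} \<Longrightarrow> e \<in> {1..E} \<Longrightarrow> i < n \<Longrightarrow>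
        (\<lambda>\<omega>. ghat n z \<omega> (restrict (fst (Xd e i \<omega>)) z) (snd (Xd e i \<omega>))) \<in> borel_measurable M"
    and prior_nonneg: "\<And>z. z \<subseteq> {..<p} \<Longrightarrow> 0 \<le> prior z"
    and prior_sum: "(\<Sum>z\<in>Pow {..<p}. prior z) = 1"
    and zs_sub: "zs \<subseteq> {..<p}"
    and invariance: "invariant p E f zs"
    and uniqueness: "\<And>z. z \<subseteq> {..<p} \<Longrightarrow> invariant p E f z \<Longrightarrow> z = zs"
    and prior_pos: "0 < prior zs"
    and cons_p: "\<And>z. z \<subseteq> {..<p} \<Longrightarrow> 0 < prior z \<Longrightarrow>
        (\<forall>e\<in>{1..E}. integrable (featM z \<Otimes>\<^sub>M lborel)
           (\<lambda>v. joint_xzy p (f e) z (fst v) (snd v) * ln (cond_yxz p (f e) z (fst v) (snd v)))) \<and>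
        conv_in_prob M
          (\<lambda>n \<omega>. ereal (1 / (real n * real E)) *
             (\<Sum>i<n. \<Sum>e\<in>{1..E}. logx (phat n z e \<omega> (restrict (fst (Xd e i \<omega>)) z) (snd (Xd e i \<omega>)))))
          (exp_log_cond p E f z)"
    and cons_g: "\<And>z. z \<subseteq> {..<p} \<Longrightarrow> 0 < prior z \<Longrightarrow>
        (\<forall>e\<in>{1..E}. integrable (featM z \<Otimes>\<^sub>M lborel)
           (\<lambda>v. joint_xzy p (f e) z (fst v) (snd v) * ln (pooled_cond p E f z (fst v) (snd v)))) \<and>
        conv_in_prob M
          (\<lambda>n \<omega>. ereal (1 / (real n * real E)) *
             (\<Sum>i<n. \<Sum>e\<in>{1..E}. logx (ghat n z \<omega> (restrict (fst (Xd e i \<omega>)) z) (snd (Xd e i \<omega>)))))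
          (exp_log_pooled p E f z)"
    and fin_var: "\<And>z e. z \<subseteq> {..<p} \<Longrightarrow> 0 < prior z \<Longrightarrow> e \<in> {1..E} \<Longrightarrow>
        integrable (featM z \<Otimes>\<^sub>M lborel)
          (\<lambda>v. joint_xzy p (f e) z (fst v) (snd v) *
               (ln (cond_yxz p (f e) z (fst v) (snd v)) - ln (pooled_cond p E f z (fst v) (snd v)))\<^sup>2)"
    and kappa: "0 < \<kappa>" "\<kappa> < 1"
  shows "\<exists>\<epsilon> :: nat \<Rightarrow> real.
     \<epsilon> \<in> O(\<lambda>n. Rconst p prior zs * exp (- \<kappa> * real n * real E * mu_min p E f prior zs)) \<and>
     (\<lambda>n. measure M {\<omega> \<in> space M. 1 - post_hat p E prior Xd phat ghat n zs \<omega> > \<epsilon> n}) \<longlonglongrightarrow> 0"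
proof -
  interpret P: prob_space M by (rule M)
  have finE: "finite {1..E}" by simp
  have Epos: "0 < real E" using E by simp
  have fmeas: "f e \<in> borel_measurable (featM {..<p} \<Otimes>\<^sub>M lborel)" if e: "e \<in> {1..E}" for e
  proof -
    have "(\<lambda>v. ennreal (f e v)) \<in> borel_measurable (featM {..<p} \<Otimes>\<^sub>M lborel)"
      using distributed_borel_measurable[OF distr[OF e]] .
    then have "(\<lambda>v. enn2real (ennreal (f e v))) \<in> borel_measurable (featM {..<p} \<Otimes>\<^sub>M lborel)"
      by measurable
    then show ?thesis using dens_nonneg[OF e] by simp
  qed
  have fint: "integrable (featM {..<p} \<Otimes>\<^sub>M lborel) (f e)" if e: "e \<in> {1..E}" for e
  proof -
    have "integrable (featM {..<p} \<Otimes>\<^sub>M lborel) (\<lambda>x. f e x * 1) \<longleftrightarrow> integrable M (\<lambda>x. 1::real)"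
      by (rule distributed_integrable[OF distr[OF e]]) (auto simp: dens_nonneg[OF e])
    then show ?thesis by simp
  qed
  define Sp where "Sp = prior_supp p prior"
  have finSp: "finite Sp" unfolding Sp_def prior_supp_def by simp
  have Sp_sub: "\<And>z. z \<in> Sp \<Longrightarrow> z \<subseteq> {..<p}" unfolding Sp_def prior_supp_def by auto
  have Sp_pos: "\<And>z. z \<in> Sp \<Longrightarrow> 0 < prior z" unfolding Sp_def prior_supp_def by auto
  have zsSp: "zs \<in> Sp" using zs_sub prior_pos unfolding Sp_def prior_supp_def by auto
  define T where "T = Sp - {zs}"
  define cp where "cp z = exp_log_cond p E f z" for z
  define cg where "cg z = exp_log_pooled p E f z" for z
  have Dz: "cp z - cg z = mu p E f z" if z: "z \<in> Sp" for z
  proof -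
    have zs': "z \<subseteq> {..<p}" "0 < prior z" using Sp_sub Sp_pos z by auto
    have "(\<Sum>e\<in>{1..E}. \<integral>v. joint_xzy p (f e) z (fst v) (snd v) * ln (cond_yxz p (f e) z (fst v) (snd v)) \<partial>(featM z \<Otimes>\<^sub>M lborel))
       - (\<Sum>e\<in>{1..E}. \<integral>v. joint_xzy p (f e) z (fst v) (snd v) * ln (pooled_cond p E f z (fst v) (snd v)) \<partial>(featM z \<Otimes>\<^sub>M lborel))
       = (\<Sum>e\<in>{1..E}. \<integral>xz. marg_xz p (f e) z xz * KL_cond p E f e z xz \<partial>featM z)"
      unfolding sum_subtractf[symmetric]
    proof (rule sum.cong[OF refl])
      fix e assume e: "e \<in> {1..E}"
      show "(\<integral>v. joint_xzy p (f e) z (fst v) (snd v) * ln (cond_yxz p (f e) z (fst v) (snd v)) \<partial>(featM z \<Otimes>\<^sub>M lborel))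
       - (\<integral>v. joint_xzy p (f e) z (fst v) (snd v) * ln (pooled_cond p E f z (fst v) (snd v)) \<partial>(featM z \<Otimes>\<^sub>M lborel))
       = (\<integral>xz. marg_xz p (f e) z xz * KL_cond p E f e z xz \<partial>featM z)"
        by (rule L1e[OF zs'(1) dens_nonneg fmeas fint e])
           (use cons_p[OF zs'] cons_g[OF zs'] e in auto)
    qed
    then show ?thesis unfolding cp_def cg_def exp_log_cond_def exp_log_pooled_def mu_def
      by (simp add: diff_divide_distrib[symmetric])
  qed
  have Dzs: "cp zs = cg zs"
  proof -
    have "(\<Sum>e\<in>{1..E}. \<integral>v. joint_xzy p (f e) zs (fst v) (snd v) * ln (cond_yxz p (f e) zs (fst v) (snd v)) \<partial>(featM zs \<Otimes>\<^sub>M lborel))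
       - (\<Sum>e\<in>{1..E}. \<integral>v. joint_xzy p (f e) zs (fst v) (snd v) * ln (pooled_cond p E f zs (fst v) (snd v)) \<partial>(featM zs \<Otimes>\<^sub>M lborel))
       = (\<Sum>e\<in>{1..E}. 0)"
      unfolding sum_subtractf[symmetric]
    proof (rule sum.cong[OF refl])
      fix e assume e: "e \<in> {1..E}"
      show "(\<integral>v. joint_xzy p (f e) zs (fst v) (snd v) * ln (cond_yxz p (f e) zs (fst v) (snd v)) \<partial>(featM zs \<Otimes>\<^sub>M lborel))
       - (\<integral>v. joint_xzy p (f e) zs (fst v) (snd v) * ln (pooled_cond p E f zs (fst v) (snd v)) \<partial>(featM zs \<Otimes>\<^sub>M lborel))
       = 0"
        by (rule L2e[OF zs_sub dens_nonneg fmeas fint e invariance])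
           (use cons_p[OF zs_sub prior_pos] cons_g[OF zs_sub prior_pos] e in auto)
    qed
    then show ?thesis unfolding cp_def cg_def exp_log_cond_def exp_log_pooled_def
      by simp
  qed
  define pv where "pv n z e i \<omega> = phat n z e \<omega> (restrict (fst (Xd e i \<omega>)) z) (snd (Xd e i \<omega>))" for n z e i \<omega>
  define gv where "gv n z e i \<omega> = ghat n z \<omega> (restrict (fst (Xd e i \<omega>)) z) (snd (Xd e i \<omega>))" for n z e i \<omega>
  define Zp where "Zp n z \<omega> = ereal (1 / (real n * real E)) * (\<Sum>i<n. \<Sum>e\<in>{1..E}. logx (pv n z e i \<omega>))" for n z \<omega>
  define Zg where "Zg n z \<omega> = ereal (1 / (real n * real E)) * (\<Sum>i<n. \<Sum>e\<in>{1..E}. logx (gv n z e i \<omega>))" for n z \<omega>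
  have logx_meas[measurable]: "logx \<in> borel_measurable borel" unfolding logx_def by measurable
  have Zp_meas[measurable]: "Zp n z \<in> borel_measurable M" if z: "z \<in> Sp" for n z
  proof -
    have [measurable]: "(\<lambda>\<omega>. logx (pv n z e i \<omega>)) \<in> borel_measurable M" if "i \<in> {..<n}" "e \<in> {1..E}" for i e
      using measurable_compose[OF meas_p[OF Sp_sub[OF z], of e i n] logx_meas] that unfolding pv_def by simp
    show ?thesis unfolding Zp_def by measurable
  qed
  have Zg_meas[measurable]: "Zg n z \<in> borel_measurable M" if z: "z \<in> Sp" for n z
  proof -
    have [measurable]: "(\<lambda>\<omega>. logx (gv n z e i \<omega>)) \<in> borel_measurable M" if "i \<in> {..<n}" "e \<in> {1..E}" for i e
      using measurable_compose[OF meas_g[OF Sp_sub[OF z], of e i n] logx_meas] that unfolding gv_def by simp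
    show ?thesis unfolding Zg_def by measurable
  qed
  define Ap where "Ap \<delta> n z = {\<omega>\<in>space M. ereal \<delta> < \<bar>Zp n z \<omega> - ereal (cp z)\<bar>}" for \<delta> n z
  define Ag where "Ag \<delta> n z = {\<omega>\<in>space M. ereal \<delta> < \<bar>Zg n z \<omega> - ereal (cg z)\<bar>}" for \<delta> n z
  define Bad where "Bad \<delta> n = (\<Union>z\<in>Sp. Ap \<delta> n z \<union> Ag \<delta> n z)" for \<delta> n
  have Ap_sets: "Ap \<delta> n z \<in> sets M" if "z \<in> Sp" for \<delta> n z
    using Zp_meas[OF that] unfolding Ap_def by measurable
  have Ag_sets: "Ag \<delta> n z \<in> sets M" if "z \<in> Sp" for \<delta> n z
    using Zg_meas[OF that] unfolding Ag_def by measurable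
  have Bad_sets: "Bad \<delta> n \<in> sets M" for \<delta> n
    unfolding Bad_def using Ap_sets Ag_sets finSp by (intro sets.finite_UN) auto
  have Bad_lim: "(\<lambda>n. measure M (Bad \<delta> n)) \<longlonglongrightarrow> 0" if d: "0 < \<delta>" for \<delta>
  proof (rule tendsto_sandwich[where f="\<lambda>_. 0" and h="\<lambda>n. \<Sum>z\<in>Sp. measure M (Ap \<delta> n z) + measure M (Ag \<delta> n z)"])
    show "\<forall>\<^sub>F n in sequentially. 0 \<le> measure M (Bad \<delta> n)" by simp
    show "\<forall>\<^sub>F n in sequentially. measure M (Bad \<delta> n) \<le> (\<Sum>z\<in>Sp. measure M (Ap \<delta> n z) + measure M (Ag \<delta> n z))"
    proof (intro always_eventually allI)
      fix n
      have "measure M (Bad \<delta> n) \<le> (\<Sum>z\<in>Sp. measure M (Ap \<delta> n z \<union> Ag \<delta> n z))"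
        unfolding Bad_def using finSp Ap_sets Ag_sets by (intro P.finite_measure_subadditive_finite) auto
      also have "\<dots> \<le> (\<Sum>z\<in>Sp. measure M (Ap \<delta> n z) + measure M (Ag \<delta> n z))"
        using Ap_sets Ag_sets by (intro sum_mono measure_Un_le) auto
      finally show "measure M (Bad \<delta> n) \<le> (\<Sum>z\<in>Sp. measure M (Ap \<delta> n z) + measure M (Ag \<delta> n z))" .
    qed
    have "(\<lambda>n. \<Sum>z\<in>Sp. measure M (Ap \<delta> n z) + measure M (Ag \<delta> n z)) \<longlonglongrightarrow> (\<Sum>z\<in>Sp. 0 + 0)"
    proof (intro tendsto_sum tendsto_add)
      fix z assume z: "z \<in> Sp"
      show "(\<lambda>n. measure M (Ap \<delta> n z)) \<longlonglongrightarrow> 0"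
        using cons_p[OF Sp_sub[OF z] Sp_pos[OF z]] d unfolding conv_in_prob_def Ap_def Zp_def pv_def cp_def by auto
      show "(\<lambda>n. measure M (Ag \<delta> n z)) \<longlonglongrightarrow> 0"
        using cons_g[OF Sp_sub[OF z] Sp_pos[OF z]] d unfolding conv_in_prob_def Ag_def Zg_def gv_def cg_def by auto
    qed
    then show "(\<lambda>n. \<Sum>z\<in>Sp. measure M (Ap \<delta> n z) + measure M (Ag \<delta> n z)) \<longlonglongrightarrow> 0" by simp
  qed simp
  have Tsub: "T \<subseteq> Pow {..<p} - {zs}" unfolding T_def using Sp_sub by auto
  have good: "1 - post_hat p E prior Xd phat ghat n zs \<omega> \<le> (\<Sum>z\<in>T. prior z / prior zs * exp (real n * real E * ((cg z - cp z) - (cg zs - cp zs) + 4 * \<delta>)))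
        \<and> 1 - post_hat p E prior Xd phat ghat n zs \<omega> \<le> 1"
    if n: "1 \<le> n" and \<omega>: "\<omega> \<in> space M" and nb: "\<omega> \<notin> Bad \<delta> n" for \<delta> n \<omega>
  proof -
    have nE: "0 < real n * real E" using n Epos by simp
    have cpos: "0 < 1 / (real n * real E)" using nE by simp
    define ap where "ap z = 1 / (real n * real E) * (\<Sum>i<n. \<Sum>e\<in>{1..E}. ln (pv n z e i \<omega>))" for z
    define bg where "bg z = 1 / (real n * real E) * (\<Sum>i<n. \<Sum>e\<in>{1..E}. ln (gv n z e i \<omega>))" for z
    have gp: "(\<forall>i\<in>{..<n}. \<forall>e\<in>{1..E}. 0 < pv n z e i \<omega>) \<and> \<bar>ap z - cp z\<bar> \<le> \<delta>" if z: "z \<in> Sp" for z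
    proof -
      have "\<not> (ereal \<delta> < \<bar>Zp n z \<omega> - ereal (cp z)\<bar>)" using nb \<omega> z unfolding Bad_def Ap_def by auto
      then have "\<not> (ereal \<delta> < \<bar>ereal (1 / (real n * real E)) * (if \<forall>i\<in>{..<n}. \<forall>e\<in>{1..E}. 0 < pv n z e i \<omega> then ereal (\<Sum>i<n. \<Sum>e\<in>{1..E}. ln (pv n z e i \<omega>)) else -\<infinity>) - ereal (cp z)\<bar>)"
        unfolding Zp_def sum2_logx[OF finite_lessThan finE] .
      then show ?thesis unfolding ap_def by (rule good_Z[OF cpos])
    qed
    have gg: "(\<forall>i\<in>{..<n}. \<forall>e\<in>{1..E}. 0 < gv n z e i \<omega>) \<and> \<bar>bg z - cg z\<bar> \<le> \<delta>" if z: "z \<in> Sp" for z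
    proof -
      have "\<not> (ereal \<delta> < \<bar>Zg n z \<omega> - ereal (cg z)\<bar>)" using nb \<omega> z unfolding Bad_def Ag_def by auto
      then have "\<not> (ereal \<delta> < \<bar>ereal (1 / (real n * real E)) * (if \<forall>i\<in>{..<n}. \<forall>e\<in>{1..E}. 0 < gv n z e i \<omega> then ereal (\<Sum>i<n. \<Sum>e\<in>{1..E}. ln (gv n z e i \<omega>)) else -\<infinity>) - ereal (cg z)\<bar>)"
        unfolding Zg_def sum2_logx[OF finite_lessThan finE] .
      then show ?thesis unfolding bg_def by (rule good_Z[OF cpos])
    qed
    define w where "w z = post_weight E prior Xd phat ghat n z \<omega>" for z
    have wform: "w z = prior z * exp (real n * real E * (bg z - ap z))" if z: "z \<in> Sp" for z
    proof -
      have "w z = prior z * (\<Prod>e\<in>{1..E}. \<Prod>i\<in>{..<n}. gv n z e i \<omega> / pv n z e i \<omega>)"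
        unfolding w_def post_weight_def gv_def pv_def by simp
      also have "(\<Prod>e\<in>{1..E}. \<Prod>i\<in>{..<n}. gv n z e i \<omega> / pv n z e i \<omega>)
          = exp ((\<Sum>i\<in>{..<n}. \<Sum>e\<in>{1..E}. ln (gv n z e i \<omega>)) - (\<Sum>i\<in>{..<n}. \<Sum>e\<in>{1..E}. ln (pv n z e i \<omega>)))"
        using gp[OF z] gg[OF z] by (intro prod_exp) auto
      also have "(\<Sum>i\<in>{..<n}. \<Sum>e\<in>{1..E}. ln (gv n z e i \<omega>)) - (\<Sum>i\<in>{..<n}. \<Sum>e\<in>{1..E}. ln (pv n z e i \<omega>))
          = real n * real E * (bg z - ap z)"
        unfolding ap_def bg_def using nE by (simp add: field_simps)
      finally show ?thesis .
    qed
    have wpos: "0 < w z" if "z \<in> Sp" for z using wform[OF that] Sp_pos[OF that] by simp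
    have w0: "w z = 0" if "z \<in> Pow {..<p} - T - {zs}" for z
    proof -
      have "z \<notin> Sp" using that unfolding T_def by auto
      moreover have "z \<subseteq> {..<p}" using that by auto
      ultimately have "\<not> 0 < prior z" unfolding Sp_def prior_supp_def by auto
      then have "prior z = 0" using prior_nonneg[OF \<open>z \<subseteq> {..<p}\<close>] by simp
      then show ?thesis unfolding w_def post_weight_def by simp
    qed
    have ph: "post_hat p E prior Xd phat ghat n zs \<omega> = w zs / (\<Sum>z\<in>Pow {..<p}. w z)"
      unfolding post_hat_def w_def ..
    have zsP: "zs \<in> Pow {..<p}" using zs_sub by simp
    have termb: "w z / w zs \<le> prior z / prior zs * exp (real n * real E * ((cg z - cp z) - (cg zs - cp zs) + 4 * \<delta>))"
      if z: "z \<in> T" for z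
    proof -
      have zS: "z \<in> Sp" using z unfolding T_def by auto
      have "w z / w zs = prior z / prior zs * exp (real n * real E * ((bg z - ap z) - (bg zs - ap zs)))"
      proof -
        have gen: "a * exp x / (b * exp y) = a / b * exp (x - y)" for a b x y :: real
          by (simp add: exp_diff)
        show ?thesis unfolding wform[OF zS] wform[OF zsSp] gen by (simp add: right_diff_distrib)
      qed
      also have "\<dots> \<le> prior z / prior zs * exp (real n * real E * ((cg z - cp z) - (cg zs - cp zs) + 4 * \<delta>))"
      proof (intro mult_left_mono)
        have "(bg z - ap z) - (bg zs - ap zs) \<le> (cg z - cp z) - (cg zs - cp zs) + 4 * \<delta>"
          using gp[OF zS] gg[OF zS] gp[OF zsSp] gg[OF zsSp] by (simp add: abs_le_iff)
        then show "exp (real n * real E * ((bg z - ap z) - (bg zs - ap zs))) \<le> exp (real n * real E * ((cg z - cp z) - (cg zs - cp zs) + 4 * \<delta>))"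
          using nE by (simp add: mult_left_mono)
        show "0 \<le> prior z / prior zs" using Sp_pos[OF zS] prior_pos by simp
      qed
      finally show ?thesis .
    qed
    have wT: "\<And>z. z \<in> T \<Longrightarrow> 0 \<le> w z" using wpos unfolding T_def by (simp add: less_imp_le)
    have wzs: "0 < w zs" by (rule wpos[OF zsSp])
    have finP: "finite (Pow {..<p::nat})" by simp
    note PB = post_bound[where w=w and P="Pow {..<p}" and T=T and zs=zs, OF finP zsP Tsub w0 wT wzs]
    have "1 - w zs / (\<Sum>z\<in>Pow {..<p}. w z) \<le> (\<Sum>z\<in>T. w z / w zs)"
      by (rule PB(1))
    also have "\<dots> \<le> (\<Sum>z\<in>T. prior z / prior zs * exp (real n * real E * ((cg z - cp z) - (cg zs - cp zs) + 4 * \<delta>)))"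
      by (intro sum_mono termb)
    finally show ?thesis unfolding ph using PB(2) by simp
  qed
  have conv: "(\<lambda>n. measure M {\<omega> \<in> space M. 1 - post_hat p E prior Xd phat ghat n zs \<omega> > \<epsilon> n}) \<longlonglongrightarrow> 0"
    if d: "0 < \<delta>" and bnd: "\<And>n \<omega>. 1 \<le> n \<Longrightarrow> \<omega> \<in> space M \<Longrightarrow> \<omega> \<notin> Bad \<delta> n \<Longrightarrow> 1 - post_hat p E prior Xd phat ghat n zs \<omega> \<le> \<epsilon> n"
    for \<delta> and \<epsilon> :: "nat \<Rightarrow> real"
  proof (rule tendsto_sandwich[where f="\<lambda>_. 0" and h="\<lambda>n. measure M (Bad \<delta> n)"])
    show "\<forall>\<^sub>F n in sequentially. 0 \<le> measure M {\<omega> \<in> space M. 1 - post_hat p E prior Xd phat ghat n zs \<omega> > \<epsilon> n}" by simp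
    show "\<forall>\<^sub>F n in sequentially. measure M {\<omega> \<in> space M. 1 - post_hat p E prior Xd phat ghat n zs \<omega> > \<epsilon> n} \<le> measure M (Bad \<delta> n)"
      using eventually_ge_at_top[of 1]
    proof eventually_elim
      case (elim n)
      have "{\<omega> \<in> space M. 1 - post_hat p E prior Xd phat ghat n zs \<omega> > \<epsilon> n} \<subseteq> Bad \<delta> n"
        using bnd[OF elim] by force
      then show ?case by (rule P.finite_measure_mono[OF _ Bad_sets])
    qed
  qed (simp_all add: Bad_lim[OF d])
  show ?thesis
  proof (cases "T = {}")
    case True
    show ?thesis
    proof (intro exI conjI)
      show "(\<lambda>n. 0::real) \<in> O(\<lambda>n. Rconst p prior zs * exp (- \<kappa> * real n * real E * mu_min p E f prior zs))" by simp
      show "(\<lambda>n. measure M {\<omega> \<in> space M. 1 - post_hat p E prior Xd phat ghat n zs \<omega> > 0}) \<longlonglongrightarrow> 0"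
        by (rule conv[of 1]) (use good[of _ _ 1] True in simp_all)
    qed
  next
    case False
    define Q where "Q = {prior z / prior zs | z. z \<subseteq> {..<p} \<and> z \<noteq> zs}"
    have "Q = (\<lambda>z. prior z / prior zs) ` {z \<in> Pow {..<p}. z \<noteq> zs}" unfolding Q_def by auto
    then have finQ: "finite Q" by simp
    have ratio_le: "prior z / prior zs \<le> Max Q" if "z \<in> T" for z
      using that Sp_sub unfolding T_def by (intro Max_ge finQ) (auto simp: Q_def)
    have Rdef: "Rconst p prior zs = Max Q * real (card Sp)" unfolding Rconst_def Q_def Sp_def ..
    obtain z0 where z0: "z0 \<in> T" using False by blast
    have "0 < prior z0 / prior zs" using z0 Sp_pos prior_pos unfolding T_def by simp
    then have MQ: "0 < Max Q" using ratio_le[OF z0] by simp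
    have cardT: "card T \<le> card Sp" unfolding T_def using finSp by (intro card_mono) auto
    have cardSp: "1 \<le> card Sp" using zsSp finSp by (simp add: Suc_le_eq card_gt_0_iff) blast
    define c where "c = (\<Sum>z\<in>T. prior z / prior zs)"
    have c0: "0 \<le> c" unfolding c_def using Sp_pos prior_pos unfolding T_def by (intro sum_nonneg) (simp add: less_imp_le)
    have "c \<le> real (card T) * Max Q" unfolding c_def by (rule sum_bounded_above[OF ratio_le]) 
    also have "\<dots> \<le> real (card Sp) * Max Q" using cardT MQ by (simp add: mult_right_mono)
    finally have cR: "c \<le> Rconst p prior zs" unfolding Rdef by (simp add: mult.commute)
    have Rpos: "0 < Rconst p prior zs" unfolding Rdef using MQ cardSp by simp
    have mmdef: "mu_min p E f prior zs = Min (mu p E f ` T)"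
      unfolding mu_min_def T_def Sp_def by (rule arg_cong[where f=Min]) auto
    have finT: "finite T" unfolding T_def using finSp by simp
    have mu_ge: "mu_min p E f prior zs \<le> mu p E f z" if "z \<in> T" for z
      unfolding mmdef using finT that by (intro Min_le) auto
    show ?thesis
    proof (cases "0 < mu_min p E f prior zs")
      case True
      define mm where "mm = mu_min p E f prior zs"
      define \<delta> where "\<delta> = (1 - \<kappa>) * mm / 4"
      have d: "0 < \<delta>" unfolding \<delta>_def mm_def using True kappa by simp
      show ?thesis
      proof (intro exI conjI)
        show "(\<lambda>n. c * exp (- \<kappa> * real n * real E * mu_min p E f prior zs)) \<in> O(\<lambda>n. Rconst p prior zs * exp (- \<kappa> * real n * real E * mu_min p E f prior zs))"
        proof (intro bigoI[where c=1] always_eventually allI)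
          fix n
          show "norm (c * exp (- \<kappa> * real n * real E * mu_min p E f prior zs)) \<le> 1 * norm (Rconst p prior zs * exp (- \<kappa> * real n * real E * mu_min p E f prior zs))"
            using c0 cR Rpos by (simp add: abs_mult mult_right_mono)
        qed
        show "(\<lambda>n. measure M {\<omega> \<in> space M. 1 - post_hat p E prior Xd phat ghat n zs \<omega> > c * exp (- \<kappa> * real n * real E * mu_min p E f prior zs)}) \<longlonglongrightarrow> 0"
        proof (rule conv[OF d])
          fix n \<omega> assume n: "1 \<le> n" and \<omega>: "\<omega> \<in> space M" and nb: "\<omega> \<notin> Bad \<delta> n"
          have "1 - post_hat p E prior Xd phat ghat n zs \<omega> \<le> (\<Sum>z\<in>T. prior z / prior zs * exp (real n * real E * ((cg z - cp z) - (cg zs - cp zs) + 4 * \<delta>)))"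
            using good[OF n \<omega> nb] by simp
          also have "\<dots> \<le> (\<Sum>z\<in>T. prior z / prior zs * exp (- \<kappa> * real n * real E * mu_min p E f prior zs))"
          proof (intro sum_mono mult_left_mono)
            fix z assume z: "z \<in> T"
            have zS: "z \<in> Sp" using z unfolding T_def by simp
            have "(cg z - cp z) - (cg zs - cp zs) + 4 * \<delta> \<le> - \<kappa> * mm"
            proof -
              have e4: "4 * \<delta> = mm - \<kappa> * mm" unfolding \<delta>_def by (simp add: left_diff_distrib)
              show ?thesis using Dz[OF zS] Dzs mu_ge[OF z, folded mm_def] e4 by linarith
            qed
            then have "real n * real E * ((cg z - cp z) - (cg zs - cp zs) + 4 * \<delta>) \<le> real n * real E * (- \<kappa> * mm)"
              by (intro mult_left_mono) auto
            then show "exp (real n * real E * ((cg z - cp z) - (cg zs - cp zs) + 4 * \<delta>)) \<le> exp (- \<kappa> * real n * real E * mu_min p E f prior zs)"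
              unfolding mm_def by (simp add: algebra_simps)
            show "0 \<le> prior z / prior zs" using z Sp_pos prior_pos unfolding T_def by (simp add: less_imp_le)
          qed
          also have "\<dots> = c * exp (- \<kappa> * real n * real E * mu_min p E f prior zs)"
            unfolding c_def by (simp add: sum_distrib_right)
          finally show "1 - post_hat p E prior Xd phat ghat n zs \<omega> \<le> c * exp (- \<kappa> * real n * real E * mu_min p E f prior zs)" .
        qed
      qed
    next
      case False
      show ?thesis
      proof (intro exI conjI)
        show "(\<lambda>n. 1::real) \<in> O(\<lambda>n. Rconst p prior zs * exp (- \<kappa> * real n * real E * mu_min p E f prior zs))"
        proof (intro bigoI[where c="1 / Rconst p prior zs"] always_eventually allI)
          fix n
          have "0 \<le> - \<kappa> * real n * real E * mu_min p E f prior zs"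
            using False kappa by (simp add: mult_nonneg_nonpos mult_nonpos_nonpos)
          then have "1 \<le> exp (- \<kappa> * real n * real E * mu_min p E f prior zs)" by simp
          then show "norm (1::real) \<le> 1 / Rconst p prior zs * norm (Rconst p prior zs * exp (- \<kappa> * real n * real E * mu_min p E f prior zs))"
            using Rpos by (simp add: abs_mult)
        qed
        show "(\<lambda>n. measure M {\<omega> \<in> space M. 1 - post_hat p E prior Xd phat ghat n zs \<omega> > 1}) \<longlonglongrightarrow> 0"
          by (rule conv[of 1]) (use good[of _ _ 1] in simp_all)
      qed
    qed
  qed
qed

thm_deps theorem4

end
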